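(* Let $g\in C^1([0,\infty))$ satisfy $g_0\le \frac{t g'(t)}{g(t)}\le g_1$ for all $t>0$, for constants $1\le g_0\le g_1$, and suppose that for some $p>2$ and $c>0$, $\big(\frac{g(|\xi|)}{|\xi|}\xi-\frac{g(|\zeta|)}{|\zeta|}\zeta\big)\cdot(\xi-\zeta)\ge c|\xi-\zeta|^p$ for all $\xi,\zeta\in\mathbb{R}^d$. Let $G(t)=\int_0^tg(s)\,\mathrm{d}s$, and let $C_0>0$, $\alpha\in(0,1)$ be the constants of the decay property described in the context. Let $B_R$ be a ball, $w\in W^{1,G}(B_R)$, and let $h\in W^{1,G}(B_R)$ be a weak solution of $\operatorname{div}\big(\frac{g(|Dh|)}{|Dh|}Dh\big)=0$ in $B_R$. Then there exists $C>0$ such that for every $0<r\le R$, with $B_r$ the ball concentric to $B_R$ of radius $r$, $$\int_{B_r}|Dw-(Dw)_r|\,\mathrm{d}x\le C\Big(\frac{r}{R}\Big)^{d+\alpha}\int_{B_R}|Dw-(Dw)_R|\,\mathrm{d}x+C\int_{B_R}|Dw-Dh|\,\mathrm{d}x.$$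
   Context: $W^{1,G}(U)$ denotes the set of $u\in W^{1,1}(U)$ with $\int_U G(|u|)+\int_U G(|Du|)<\infty$. For a ball $B_\rho$, $(F)_\rho$ denotes the average of $F$ over $B_\rho$. Decay property (a result of Baroni used by the paper): there exist $C_0>0$ and $\alpha\in(0,1)$ such that for every ball $B_R$ and every weak solution $h\in W^{1,G}(B_R)$ of $\operatorname{div}\big(\frac{g(|Dh|)}{|Dh|}Dh\big)=0$ in $B_R$, and every $r\in(0,R]$, $\int_{B_r}|Dh-(Dh)_r|\,\mathrm{d}x\le C_0\big(\frac{r}{R}\big)^{d+\alpha}\int_{B_R}|Dh-(Dh)_R|\,\mathrm{d}x$ (concentric balls). The exponent $\alpha$ in the claim is this one. *)

theory Defs
  imports "HOL-Analysis.Analysis"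
begin

fun Ck :: "nat \<Rightarrow> ('a::euclidean_space \<Rightarrow> real) set" where
  "Ck 0 = {f. continuous_on UNIV f}"
| "Ck (Suc k) = {f. (\<forall>x. f differentiable (at x)) \<and>
      (\<forall>i\<in>Basis. (\<lambda>x. frechet_derivative f (at x) i) \<in> Ck k)}"

definition smooth_fun :: "('a::euclidean_space \<Rightarrow> real) \<Rightarrow> bool" where
  "smooth_fun f \<longleftrightarrow> (\<forall>k. f \<in> Ck k)"

definition test_fun :: "'a::euclidean_space set \<Rightarrow> ('a \<Rightarrow> real) \<Rightarrow> bool" where
  "test_fun U \<phi> \<longleftrightarrow> smooth_fun \<phi> \<and> compact (closure {x. \<phi> x \<noteq> 0})
      \<and> closure {x. \<phi> x \<noteq> 0} \<subseteq> U"

definition grad :: "('a::euclidean_space \<Rightarrow> real) \<Rightarrow> 'a \<Rightarrow> 'a" where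
  "grad \<phi> x = (\<Sum>i\<in>Basis. frechet_derivative \<phi> (at x) i *\<^sub>R i)"

definition weak_grad :: "'a::euclidean_space set \<Rightarrow> ('a \<Rightarrow> real) \<Rightarrow> ('a \<Rightarrow> 'a) \<Rightarrow> bool" where
  "weak_grad U u Du \<longleftrightarrow>
     (\<forall>K. compact K \<and> K \<subseteq> U \<longrightarrow> set_integrable lborel K u \<and> set_integrable lborel K Du) \<and>
     (\<forall>\<phi>. test_fun U \<phi> \<longrightarrow> (\<forall>i\<in>Basis.
        (\<integral>x\<in>U. u x * frechet_derivative \<phi> (at x) i \<partial>lborel)
          = - (\<integral>x\<in>U. (Du x \<bullet> i) * \<phi> x \<partial>lborel)))"

definition W11 :: "'a::euclidean_space set \<Rightarrow> ('a \<Rightarrow> real) \<Rightarrow> ('a \<Rightarrow> 'a) \<Rightarrow> bool" where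
  "W11 U u Du \<longleftrightarrow> set_integrable lborel U u \<and> set_integrable lborel U Du \<and> weak_grad U u Du"

definition W1G :: "(real \<Rightarrow> real) \<Rightarrow> 'a::euclidean_space set \<Rightarrow> ('a \<Rightarrow> real) \<Rightarrow> ('a \<Rightarrow> 'a) \<Rightarrow> bool" where
  "W1G G U u Du \<longleftrightarrow> W11 U u Du \<and>
     set_integrable lborel U (\<lambda>x. G \<bar>u x\<bar>) \<and> set_integrable lborel U (\<lambda>x. G (norm (Du x)))"

definition weak_sol :: "(real \<Rightarrow> real) \<Rightarrow> (real \<Rightarrow> real) \<Rightarrow> 'a::euclidean_space set
    \<Rightarrow> ('a \<Rightarrow> real) \<Rightarrow> ('a \<Rightarrow> 'a) \<Rightarrow> bool" where
  "weak_sol g G U h Dh \<longleftrightarrow> W1G G U h Dh \<and>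
     (\<forall>\<phi>. test_fun U \<phi> \<longrightarrow>
        (\<integral>x\<in>U. ((g (norm (Dh x)) / norm (Dh x)) *\<^sub>R Dh x) \<bullet> grad \<phi> x \<partial>lborel) = 0)"

definition avg :: "'a::euclidean_space set \<Rightarrow> ('a \<Rightarrow> 'a) \<Rightarrow> 'a" where
  "avg U F = (1 / measure lborel U) *\<^sub>R (\<integral>x\<in>U. F x \<partial>lborel)"

definition osc :: "'a::euclidean_space set \<Rightarrow> ('a \<Rightarrow> 'a) \<Rightarrow> real" where
  "osc U F = (\<integral>x\<in>U. norm (F x - avg U F) \<partial>lborel)"

end

theory Submission
  imports Defs
begin

lemma set_integrable_const_ball:
  fixes c :: "'a::euclidean_space"
  shows "set_integrable lborel (ball x r) (\<lambda>_. c)"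
  unfolding set_integrable_def
  by (rule integrable_scaleR_left, rule integrable_real_indicator) (use emeasure_lborel_ball_finite[of x r] in \<open>auto simp: less_top\<close>)

lemma osc_tri:
  fixes F H :: "'a::euclidean_space \<Rightarrow> 'a"
  assumes F: "set_integrable lborel (ball x r) F" and H: "set_integrable lborel (ball x r) H"
  shows "osc (ball x r) F \<le> osc (ball x r) H + 2 * (\<integral>y\<in>ball x r. norm (F y - H y) \<partial>lborel)"
proof -
  let ?U = "ball x r"
  let ?m = "measure lborel ?U"
  let ?I = "(\<integral>y\<in>?U. norm (F y - H y) \<partial>lborel)"
  have fin: "emeasure lborel ?U \<noteq> \<infinity>" using emeasure_lborel_ball_finite[of x r] by auto
  have FH: "set_integrable lborel ?U (\<lambda>y. F y - H y)" using F H by auto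
  have Inn: "?I \<ge> 0"
    unfolding set_lebesgue_integral_def by (rule integral_nonneg_AE) (auto simp: indicator_def)
  have m0: "?m \<ge> 0" by simp
  have "avg ?U F - avg ?U H = (1 / ?m) *\<^sub>R (\<integral>y\<in>?U. F y - H y \<partial>lborel)"
    unfolding avg_def using set_integral_diff(2)[OF F H] by (simp add: scaleR_diff_right)
  hence "norm (avg ?U F - avg ?U H) \<le> (1 / ?m) * ?I"
    using set_integral_norm_bound[OF FH] m0 by (simp add: divide_right_mono)
  hence key: "?m * norm (avg ?U F - avg ?U H) \<le> ?I"
  proof (cases "?m = 0")
    case True then show ?thesis using Inn by (metis mult_zero_left)
  next
    case False
    assume a: "norm (avg ?U F - avg ?U H) \<le> (1 / ?m) * ?I"
    have "?m * norm (avg ?U F - avg ?U H) \<le> ?m * ((1 / ?m) * ?I)"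
      by (rule mult_left_mono[OF a m0])
    moreover have "?m * ((1 / ?m) * ?I) = ?I" proof -
      have "?m * (1 / ?m) = 1" using False by (metis mult.right_neutral times_divide_eq_right divide_self)
      then show ?thesis by (metis mult.assoc mult_1_left)
    qed
    ultimately show ?thesis by linarith
  qed
  have i1: "set_integrable lborel ?U (\<lambda>y. norm (F y - H y))" by (rule set_integrable_norm[OF FH])
  have i2: "set_integrable lborel ?U (\<lambda>y. norm (H y - avg ?U H))"
    by (rule set_integrable_norm, rule set_integral_diff(1)[OF H set_integrable_const_ball])
  have i3: "set_integrable lborel ?U (\<lambda>y. norm (F y - avg ?U F))"
    by (rule set_integrable_norm, rule set_integral_diff(1)[OF F set_integrable_const_ball])
  have i4: "set_integrable lborel ?U (\<lambda>_. norm (avg ?U F - avg ?U H))"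
    unfolding set_integrable_def
    by (rule integrable_scaleR_left, rule integrable_real_indicator) (use emeasure_lborel_ball_finite[of x r] in \<open>auto simp: less_top\<close>)
  have "osc ?U F \<le> (\<integral>y\<in>?U. (norm (F y - H y) + norm (H y - avg ?U H)) + norm (avg ?U F - avg ?U H) \<partial>lborel)"
    unfolding osc_def
  proof (rule set_integral_mono[OF i3])
    show "set_integrable lborel ?U (\<lambda>y. (norm (F y - H y) + norm (H y - avg ?U H)) + norm (avg ?U F - avg ?U H))"
      by (rule set_integral_add(1)[OF set_integral_add(1)[OF i1 i2] i4])
    fix y
    have "norm (F y - avg ?U F) = norm ((F y - H y) + (H y - avg ?U H) - (avg ?U F - avg ?U H))"
      by (simp add: algebra_simps)
    also have "\<dots> \<le> norm ((F y - H y) + (H y - avg ?U H)) + norm (avg ?U F - avg ?U H)"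
      by (rule norm_triangle_ineq4)
    also have "\<dots> \<le> (norm (F y - H y) + norm (H y - avg ?U H)) + norm (avg ?U F - avg ?U H)"
      by (rule add_right_mono, rule norm_triangle_ineq)
    finally show "norm (F y - avg ?U F) \<le> (norm (F y - H y) + norm (H y - avg ?U H)) + norm (avg ?U F - avg ?U H)" .
  qed
  also have "\<dots> = ?I + osc ?U H + ?m * norm (avg ?U F - avg ?U H)"
    unfolding osc_def
    using set_integral_add(2)[OF set_integral_add(1)[OF i1 i2] i4] set_integral_add(2)[OF i1 i2]
      set_integral_const[of ?U lborel "norm (avg ?U F - avg ?U H)"] fin by simp
  finally show ?thesis using key by simp
qed

lemma int_mono_ball:
  fixes f :: "'a::euclidean_space \<Rightarrow> real"
  assumes f: "set_integrable lborel (ball x R) f" and nn: "\<And>y. f y \<ge> 0" and rR: "r \<le> R"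
  shows "(\<integral>y\<in>ball x r. f y \<partial>lborel) \<le> (\<integral>y\<in>ball x R. f y \<partial>lborel)"
proof -
  have sub: "ball x r \<subseteq> ball x R" using rR by auto
  have fr: "set_integrable lborel (ball x r) f" by (rule set_integrable_subset[OF f _ sub]) simp
  show ?thesis
    unfolding set_lebesgue_integral_def
    using fr f sub nn unfolding set_integrable_def
    by (intro integral_mono) (auto simp: indicator_def)
qed

theorem proposition4p3:
  fixes g g' G :: "real \<Rightarrow> real"
    and g0 g1 p c C0 \<alpha> R :: real
    and x0 :: "'a::euclidean_space"
    and w h :: "'a \<Rightarrow> real" and Dw Dh :: "'a \<Rightarrow> 'a"
  assumes g_deriv: "\<And>t. t \<ge> 0 \<Longrightarrow> (g has_real_derivative g' t) (at t within {0..})"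
    and g'_cont: "continuous_on {0..} g'"
    and g01: "1 \<le> g0" "g0 \<le> g1"
    and g_ratio: "\<And>t. t > 0 \<Longrightarrow> g0 \<le> t * g' t / g t \<and> t * g' t / g t \<le> g1"
    and p: "p > 2" and c: "c > 0"
    and mono: "\<And>\<xi> \<zeta> :: 'a.
       ((g (norm \<xi>) / norm \<xi>) *\<^sub>R \<xi> - (g (norm \<zeta>) / norm \<zeta>) *\<^sub>R \<zeta>) \<bullet> (\<xi> - \<zeta>)
         \<ge> c * norm (\<xi> - \<zeta>) powr p"
    and G_def: "\<And>t. t \<ge> 0 \<Longrightarrow> G t = integral {0..t} g"
    and C0: "C0 > 0" and \<alpha>: "0 < \<alpha>" "\<alpha> < 1"
    and decay: "\<And>(y0::'a) \<rho> v Dv r. 0 < \<rho> \<Longrightarrow> weak_sol g G (ball y0 \<rho>) v Dv \<Longrightarrow>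
       0 < r \<Longrightarrow> r \<le> \<rho> \<Longrightarrow>
       osc (ball y0 r) Dv \<le> C0 * (r / \<rho>) powr (real DIM('a) + \<alpha>) * osc (ball y0 \<rho>) Dv"
    and R: "R > 0"
    and w: "W1G G (ball x0 R) w Dw"
    and h: "weak_sol g G (ball x0 R) h Dh"
  shows "\<exists>C>0. \<forall>r. 0 < r \<and> r \<le> R \<longrightarrow>
     osc (ball x0 r) Dw \<le> C * (r / R) powr (real DIM('a) + \<alpha>) * osc (ball x0 R) Dw
        + C * (\<integral>x\<in>ball x0 R. norm (Dw x - Dh x) \<partial>lborel)"
proof (intro exI[of _ "3 * C0 + 2"] conjI allI impI)
  show "3 * C0 + 2 > 0" using C0 by simp
  fix r assume r: "0 < r \<and> r \<le> R"
  let ?q = "(r / R) powr (real DIM('a) + \<alpha>)"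
  let ?I = "(\<integral>x\<in>ball x0 R. norm (Dw x - Dh x) \<partial>lborel)"
  have DwR: "set_integrable lborel (ball x0 R) Dw" using w unfolding W1G_def W11_def by simp
  have DhR: "set_integrable lborel (ball x0 R) Dh" using h unfolding weak_sol_def W1G_def W11_def by simp
  have sub: "ball x0 r \<subseteq> ball x0 R" using r by auto
  have Dwr: "set_integrable lborel (ball x0 r) Dw" by (rule set_integrable_subset[OF DwR _ sub]) simp
  have Dhr: "set_integrable lborel (ball x0 r) Dh" by (rule set_integrable_subset[OF DhR _ sub]) simp
  have q0: "?q \<ge> 0" by simp
  have q1: "?q \<le> 1"
    using r R \<alpha> by (intro powr_le1) auto
  have In: "?I \<ge> 0"
    unfolding set_lebesgue_integral_def by (rule integral_nonneg_AE) (auto simp: indicator_def)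
  have oscw: "osc (ball x0 R) Dw \<ge> 0"
    unfolding osc_def set_lebesgue_integral_def by (rule integral_nonneg_AE) (auto simp: indicator_def)
  have Ir: "(\<integral>x\<in>ball x0 r. norm (Dw x - Dh x) \<partial>lborel) \<le> ?I"
    by (rule int_mono_ball[OF set_integrable_norm[OF set_integral_diff(1)[OF DwR DhR]]]) (use r in auto)
  have dh: "osc (ball x0 r) Dh \<le> C0 * ?q * osc (ball x0 R) Dh"
    using decay[OF R h] r by auto
  have hR: "osc (ball x0 R) Dh \<le> osc (ball x0 R) Dw + 2 * ?I"
    using osc_tri[OF DhR DwR] by (simp add: norm_minus_commute)
  have "osc (ball x0 r) Dw \<le> osc (ball x0 r) Dh + 2 * ?I"
    using osc_tri[OF Dwr Dhr] Ir by linarith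
  also have "\<dots> \<le> C0 * ?q * (osc (ball x0 R) Dw + 2 * ?I) + 2 * ?I"
    using dh hR C0 q0 by (smt (verit) mult_left_mono mult_nonneg_nonneg)
  also have "\<dots> = C0 * ?q * osc (ball x0 R) Dw + (2 * C0 * ?q + 2) * ?I"
    by (simp add: algebra_simps)
  also have "\<dots> \<le> (3 * C0 + 2) * ?q * osc (ball x0 R) Dw + (3 * C0 + 2) * ?I"
  proof (rule add_mono)
    show "C0 * ?q * osc (ball x0 R) Dw \<le> (3 * C0 + 2) * ?q * osc (ball x0 R) Dw"
      using C0 q0 oscw by (intro mult_right_mono) auto
    have "C0 * ?q \<le> C0 * 1" using C0 q1 by (intro mult_left_mono) auto
    hence "2 * C0 * ?q + 2 \<le> 3 * C0 + 2" using C0 by linarith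
    then show "(2 * C0 * ?q + 2) * ?I \<le> (3 * C0 + 2) * ?I" using In by (rule mult_right_mono)
  qed
  finally show "osc (ball x0 r) Dw \<le> (3 * C0 + 2) * ?q * osc (ball x0 R) Dw + (3 * C0 + 2) * ?I" .
qed

end
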